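(* Let $m,n\ge1$ and let $\lambda\subseteq\nu\subseteq(n-1)^{m-1}$ be partitions. For $X\in\mathrm{PASM}(\nu/\lambda,m,n)$ let $c_{ij}=\sum_{i'\le i,\,j'\le j}X_{i'j'}$ and let $\Psi(X)$ be the function $g_X$ on $P(\nu/\lambda)$ given by $g_X(i,j)=c_{ij}$. Then $\Psi(X)$ lies in the order polytope $\mathcal{O}(P(\nu/\lambda))$ for every $X\in\mathrm{PASM}(\nu/\lambda,m,n)$.
   Context: A partition $\mu=(\mu_1\ge\mu_2\ge\cdots)$ is a weakly decreasing sequence of nonnegative integers with finitely many nonzero terms, identified with the set of positions $\{(i,j):i\ge1,1\le j\le\mu_i\}$; $\mu\subseteq\nu$ means $\mu_i\le\nu_i$ for all $i$, and $\mu\subseteq a^b$ means $\mu$ has at most $b$ positive parts and $\mu_1\le a$. For $\mu\subseteq(n-1)^{m-1}$, the $m\times n$ matrix $M^\mu$ has entries $M^\mu_{1,\mu_1+1}=1$; for each $1\le k\le m-1$ with $\mu_k>\mu_{k+1}$, $M^\mu_{k+1,\mu_{k+1}+1}=1$ and $M^\mu_{k+1,\mu_k+1}=-1$; all other entries $0$. $\mathrm{PASM}(\nu/\lambda,m,n)$ is the convex hull in $\mathbb{R}^{mn}$ of $\{M^\mu:\lambda\subseteq\mu\subseteq\nu\}$. $P(\nu/\lambda)$ is the poset whose elements are the positions $(i,j)$ in $\nu$ but not in $\lambda$, ordered by $(i,j)\le(i',j')$ iff $i\le i'$ and $j\le j'$. For a finite poset $P$, the order polytope $\mathcal{O}(P)$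 is the set of functions $f:P\to\mathbb{R}$ with $0\le f(p)\le1$ for all $p$ and $f(p)\le f(q)$ whenever $p\le q$. *)

theory Defs
  imports "HOL-Analysis.Analysis"
begin

text \<open>Partitions are sequences mu :: nat => nat indexed from 1 (mu 1 is the largest part);
  the unused value mu 0 is normalised to 0.\<close>
definition is_partition :: "(nat \<Rightarrow> nat) \<Rightarrow> bool" where
  "is_partition mu \<longleftrightarrow> mu 0 = 0 \<and> (\<forall>i\<ge>1. mu (Suc i) \<le> mu i) \<and> finite {i. mu i \<noteq> 0}"

definition part_le :: "(nat \<Rightarrow> nat) \<Rightarrow> (nat \<Rightarrow> nat) \<Rightarrow> bool" where
  "part_le mu nu \<longleftrightarrow> (\<forall>i. mu i \<le> nu i)"

text \<open>mu contained in the rectangle a^b: at most b positive parts and mu_1 <= a.\<close>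
definition in_rect :: "(nat \<Rightarrow> nat) \<Rightarrow> nat \<Rightarrow> nat \<Rightarrow> bool" where
  "in_rect mu a b \<longleftrightarrow> mu 1 \<le> a \<and> (\<forall>i>b. mu i = 0)"

text \<open>Matrices are functions on positions (row, column), rows 1..m, columns 1..n,
  all other entries 0.  The matrix M^mu:\<close>
definition Mmat :: "nat \<Rightarrow> (nat \<Rightarrow> nat) \<Rightarrow> nat \<times> nat \<Rightarrow> real" where
  "Mmat m mu = (\<lambda>(r, c).
     if r = 1 \<and> c = mu 1 + 1 then 1
     else if 2 \<le> r \<and> r \<le> m \<and> mu (r - 1) > mu r \<and> c = mu r + 1 then 1
     else if 2 \<le> r \<and> r \<le> m \<and> mu (r - 1) > mu r \<and> c = mu (r - 1) + 1 then -1
     else 0)"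

text \<open>Convexity for sets of real-valued functions (pointwise linear structure),
  so that "fun_convex hull S" is the convex hull.\<close>
definition fun_convex :: "('a \<Rightarrow> real) set \<Rightarrow> bool" where
  "fun_convex S \<longleftrightarrow> (\<forall>x\<in>S. \<forall>y\<in>S. \<forall>u::real. 0 \<le> u \<and> u \<le> 1 \<longrightarrow>
      (\<lambda>p. u * x p + (1 - u) * y p) \<in> S)"

definition PASM :: "(nat \<Rightarrow> nat) \<Rightarrow> (nat \<Rightarrow> nat) \<Rightarrow> nat \<Rightarrow> nat \<Rightarrow> (nat \<times> nat \<Rightarrow> real) set" where
  "PASM nu lam m n = fun_convex hull
     {Mmat m mu | mu. is_partition mu \<and> part_le lam mu \<and> part_le mu nu}"

definition skew_cells :: "(nat \<Rightarrow> nat) \<Rightarrow> (nat \<Rightarrow> nat) \<Rightarrow> (nat \<times> nat) set" where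
  "skew_cells nu lam = {(i, j). 1 \<le> i \<and> 1 \<le> j \<and> j \<le> nu i \<and> \<not> j \<le> lam i}"

definition cell_le :: "nat \<times> nat \<Rightarrow> nat \<times> nat \<Rightarrow> bool" where
  "cell_le p q \<longleftrightarrow> fst p \<le> fst q \<and> snd p \<le> snd q"

text \<open>Order polytope of the poset (P, le): functions with 0 <= f <= 1 on P, order preserving.
  Only the values on P matter.\<close>
definition order_polytope :: "'a set \<Rightarrow> ('a \<Rightarrow> 'a \<Rightarrow> bool) \<Rightarrow> ('a \<Rightarrow> real) set" where
  "order_polytope P le = {f. (\<forall>p\<in>P. 0 \<le> f p \<and> f p \<le> 1) \<and>
      (\<forall>p\<in>P. \<forall>q\<in>P. le p q \<longrightarrow> f p \<le> f q)}"

definition Psi :: "(nat \<times> nat \<Rightarrow> real) \<Rightarrow> nat \<times> nat \<Rightarrow> real" where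
  "Psi X = (\<lambda>(i, j). \<Sum>i'\<in>{1..i}. \<Sum>j'\<in>{1..j}. X (i', j'))"

end

theory Submission
  imports Defs
begin

lemma Mmat_row1: "Mmat m mu (Suc 0, c) = (if c = mu 1 + 1 then 1 else 0)"
  by (simp add: Mmat_def)

lemma Mmat_row: assumes "2 \<le> r" "r \<le> m"
  shows "Mmat m mu (r, c) = (if mu r < mu (r-1) then (if c = mu r + 1 then 1 else 0)
            - (if c = mu (r-1) + 1 then 1 else 0) else 0)"
  using assms by (auto simp: Mmat_def)

lemma rowsum: assumes "2 \<le> r" "r \<le> m"
  shows "(\<Sum>c\<in>{1..j}. Mmat m mu (r, c)) = (if mu r < mu (r-1) then (if mu r + 1 \<le> j then 1 else 0)
            - (if mu (r-1) + 1 \<le> j then 1 else 0) else (0::real))"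
proof (cases "mu r < mu (r-1)")
  case True
  then have "(\<Sum>c\<in>{1..j}. Mmat m mu (r, c)) = (\<Sum>c\<in>{1..j}. (if c = mu r + 1 then 1 else 0)
            - (if c = mu (r-1) + 1 then 1 else (0::real)))"
    using assms by (intro sum.cong) (auto simp: Mmat_row)
  also have "\<dots> = (if mu r + 1 \<le> j then 1 else 0) - (if mu (r-1) + 1 \<le> j then 1 else 0)"
    by (simp add: sum_subtractf sum.delta')
  finally show ?thesis using True by simp
next
  case False
  then show ?thesis using assms by (simp add: Mmat_row)
qed

lemma colsum: "is_partition mu \<Longrightarrow> 1 \<le> i \<Longrightarrow> i \<le> m \<Longrightarrow>
   (\<Sum>i'\<in>{1..i}. \<Sum>j'\<in>{1..j}. Mmat m mu (i', j')) = (if mu i < j then 1 else 0)"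
proof (induction i)
  case 0 then show ?case by simp
next
  case (Suc i)
  show ?case
  proof (cases "i = 0")
    case True
    then show ?thesis by (simp add: Mmat_row1 sum.delta')
  next
    case False
    have mono: "mu (Suc i) \<le> mu i" using Suc.prems False unfolding is_partition_def by auto
    have "(\<Sum>i'\<in>{1..Suc i}. \<Sum>j'\<in>{1..j}. Mmat m mu (i', j'))
        = (\<Sum>i'\<in>{1..i}. \<Sum>j'\<in>{1..j}. Mmat m mu (i', j')) + (\<Sum>j'\<in>{1..j}. Mmat m mu (Suc i, j'))"
      by simp
    also have "\<dots> = (if mu i < j then 1 else 0) + (\<Sum>j'\<in>{1..j}. Mmat m mu (Suc i, j'))"
      using Suc False by simp
    also have "(\<Sum>j'\<in>{1..j}. Mmat m mu (Suc i, j')) = (if mu (Suc i) < mu i then (if mu (Suc i) + 1 \<le> j then 1 else 0)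
            - (if mu i + 1 \<le> j then 1 else 0) else (0::real))"
      using rowsum[where r="Suc i" and m=m and j=j and mu=mu] Suc.prems False by simp
    finally show ?thesis using mono by auto
  qed
qed

lemma convex_OP: "fun_convex {X. Psi X \<in> order_polytope P cell_le}"
  unfolding fun_convex_def
proof (intro ballI allI impI)
  fix x y u assume x: "x \<in> {X. Psi X \<in> order_polytope P cell_le}"
    and y: "y \<in> {X. Psi X \<in> order_polytope P cell_le}" and u: "0 \<le> u \<and> u \<le> (1::real)"
  have eq: "Psi (\<lambda>p. u * x p + (1 - u) * y p) = (\<lambda>q. u * Psi x q + (1 - u) * Psi y q)"
    unfolding Psi_def by (auto simp: sum.distrib sum_distrib_left)
  have u1: "0 \<le> 1 - u" using u by simp
  have A: "\<And>a b. 0 \<le> a \<Longrightarrow> a \<le> 1 \<Longrightarrow> 0 \<le> b \<Longrightarrow> b \<le> 1 \<Longrightarrow> 0 \<le> u*a + (1-u)*b \<and> u*a + (1-u)*b \<le> 1"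
  proof -
    fix a b :: real assume h: "0 \<le> a" "a \<le> 1" "0 \<le> b" "b \<le> 1"
    have "u*a \<le> u" "(1-u)*b \<le> 1-u" using h u u1 by (auto intro: mult_left_le)
    moreover have "0 \<le> u*a" "0 \<le> (1-u)*b" using h u u1 by auto
    ultimately show "0 \<le> u*a + (1-u)*b \<and> u*a + (1-u)*b \<le> 1" by linarith
  qed
  have B: "\<And>a b a' b'. a \<le> a' \<Longrightarrow> b \<le> b' \<Longrightarrow> u*a + (1-u)*b \<le> u*a' + (1-u)*b'"
    using u u1 by (intro add_mono mult_left_mono) auto
  show "(\<lambda>p. u * x p + (1 - u) * y p) \<in> {X. Psi X \<in> order_polytope P cell_le}"
  proof -
    have "Psi (\<lambda>p. u * x p + (1 - u) * y p) \<in> order_polytope P cell_le"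
    proof -
      have xa: "\<forall>p\<in>P. 0 \<le> Psi x p \<and> Psi x p \<le> 1" "\<forall>p\<in>P. \<forall>q\<in>P. cell_le p q \<longrightarrow> Psi x p \<le> Psi x q"
        using x unfolding order_polytope_def by auto
      have ya: "\<forall>p\<in>P. 0 \<le> Psi y p \<and> Psi y p \<le> 1" "\<forall>p\<in>P. \<forall>q\<in>P. cell_le p q \<longrightarrow> Psi y p \<le> Psi y q"
        using y unfolding order_polytope_def by auto
      show ?thesis unfolding eq order_polytope_def mem_Collect_eq
        using xa ya A B by blast
    qed
    then show ?thesis by simp
  qed
qed

theorem mainTheorem4:
  fixes m n :: nat and lam nu :: "nat \<Rightarrow> nat" and X :: "nat \<times> nat \<Rightarrow> real"
  assumes "1 \<le> m" and "1 \<le> n"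
    and "is_partition lam" and "is_partition nu"
    and "part_le lam nu" and "in_rect nu (n - 1) (m - 1)"
    and "X \<in> PASM nu lam m n"
  shows "Psi X \<in> order_polytope (skew_cells nu lam) cell_le"
proof -
  have sub: "{Mmat m mu | mu. is_partition mu \<and> part_le lam mu \<and> part_le mu nu}
      \<subseteq> {X. Psi X \<in> order_polytope (skew_cells nu lam) cell_le}"
  proof
    fix Y assume "Y \<in> {Mmat m mu | mu. is_partition mu \<and> part_le lam mu \<and> part_le mu nu}"
    then obtain mu where Y: "Y = Mmat m mu" and mu: "is_partition mu" "part_le lam mu" "part_le mu nu"
      by auto
    have cellm: "i \<le> m" if "(i, j) \<in> skew_cells nu lam" for i j
    proof (rule ccontr)
      assume "\<not> i \<le> m"
      then have "nu i = 0" using assms(6) unfolding in_rect_def by auto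
      then show False using that unfolding skew_cells_def by auto
    qed
    have val: "Psi Y (i, j) = (if mu i < j then 1 else 0)" if "(i, j) \<in> skew_cells nu lam" for i j
      using colsum[OF mu(1), of i m j] cellm[OF that] that unfolding Y Psi_def skew_cells_def by auto
    have monomu: "mu i' \<le> mu i" if "1 \<le> i" "i \<le> i'" for i i'
      using that(2)
    proof (induction i' rule: dec_induct)
      case (step k)
      have "mu (Suc k) \<le> mu k" using mu(1) step.hyps(1) that(1) unfolding is_partition_def by auto
      then show ?case using step.IH by linarith
    qed simp
    have b: "\<forall>p\<in>skew_cells nu lam. 0 \<le> Psi Y p \<and> Psi Y p \<le> 1"
      using val by auto
    have o: "\<forall>p\<in>skew_cells nu lam. \<forall>q\<in>skew_cells nu lam. cell_le p q \<longrightarrow> Psi Y p \<le> Psi Y q"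
    proof (intro ballI impI)
      fix p q assume c: "p \<in> skew_cells nu lam" "q \<in> skew_cells nu lam" and le: "cell_le p q"
      obtain i j i' j' where pq: "p = (i, j)" "q = (i', j')" by (cases p, cases q) auto
      have c1: "(i, j) \<in> skew_cells nu lam" "(i', j') \<in> skew_cells nu lam" using c pq by auto
      have "mu i' \<le> mu i" using monomu c1 le pq unfolding skew_cells_def cell_le_def by auto
      then show "Psi Y p \<le> Psi Y q" using val[OF c1(1)] val[OF c1(2)] le pq
        unfolding cell_le_def by auto
    qed
    show "Y \<in> {X. Psi X \<in> order_polytope (skew_cells nu lam) cell_le}"
      unfolding order_polytope_def using b o by blast
  qed
  have "PASM nu lam m n \<subseteq> {X. Psi X \<in> order_polytope (skew_cells nu lam) cell_le}"
    unfolding PASM_def by (rule hull_minimal[where S=fun_convex, OF sub convex_OP[where P="skew_cells nu lam"]])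
  then show ?thesis using assms(7) by auto
qed

end
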